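(* Let $P_1,\dots,P_\ell$ and $P'_1,\dots,P'_\ell$ be transition matrices on the finite set $S$, all reversible with respect to $\pi$ (not necessarily irreducible). Let $a_1,\dots,a_\ell>0$ with $\sum_k a_k=1$, and set $P=\sum_{k=1}^\ell a_kP_k$ and $P'=\sum_{k=1}^\ell a_kP'_k$. If $P$ and $P'$ are irreducible, and for each $k$ the eigenvalues of $P_k-P'_k$ (equivalently, of $D(P_k-P'_k)$ with $D=\mathrm{diag}(\pi)$) are all non-negative, then $P'$ efficiency-dominates $P$.
   Context: $S$ is a finite set with $|S|=n$, identified with $\{1,\dots,n\}$, and $\pi$ is a probability distribution on $S$ with $\pi(x)>0$ for all $x$; $D=\mathrm{diag}(\pi(1),\dots,\pi(n))$. A transition matrix $P$ is reversible with respect to $\pi$ if $\pi(x)P(x,y)=\pi(y)P(y,x)$ for all $x,y$; irreducible if every state can be reached from every other with positive probability in some number of steps. For a Markov chain $X_1,X_2,\dots$ with transition matrix $P$ and $X_1\sim\pi$, $v(f,P)=\lim_{N\to\infty}\frac1N\mathrm{Var}\big(\sum_{i=1}^N f(X_i)\big)$. $P$ efficiency-dominates $Q$ if $v(f,P)\le v(f,Q)$ for all $f:S\to\mathbb R$. *)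

theory Defs
  imports "HOL-Analysis.Analysis"
begin

text \<open>The finite state space S is a finite type 'n; distributions are vectors
  real^'n, transition matrices are real^'n^'n with P$x$y the probability of x to y.\<close>

definition prob_dist :: "real^'n \<Rightarrow> bool" where
  "prob_dist \<pi> \<longleftrightarrow> (\<forall>x. \<pi> $ x > 0) \<and> (\<Sum>x\<in>UNIV. \<pi> $ x) = 1"

definition transition_matrix :: "real^'n^'n \<Rightarrow> bool" where
  "transition_matrix P \<longleftrightarrow> (\<forall>x y. P $ x $ y \<ge> 0) \<and> (\<forall>x. (\<Sum>y\<in>UNIV. P $ x $ y) = 1)"

definition reversible :: "real^'n \<Rightarrow> real^'n^'n \<Rightarrow> bool" where
  "reversible \<pi> P \<longleftrightarrow> (\<forall>x y. \<pi> $ x * P $ x $ y = \<pi> $ y * P $ y $ x)"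

fun mpow :: "real^'n^'n \<Rightarrow> nat \<Rightarrow> real^'n^'n" where
  "mpow P 0 = mat 1"
| "mpow P (Suc m) = mpow P m ** P"

definition irreducible_chain :: "real^'n^'n \<Rightarrow> bool" where
  "irreducible_chain P \<longleftrightarrow> (\<forall>x y. \<exists>m. mpow P m $ x $ y > 0)"

text \<open>Law of the path (X_1,...,X_N) of the chain started in \<pi>, paths indexed by 0..N-1.\<close>
definition path_weight :: "real^'n \<Rightarrow> real^'n^'n \<Rightarrow> nat \<Rightarrow> (nat \<Rightarrow> 'n) \<Rightarrow> real" where
  "path_weight \<pi> P N p = \<pi> $ (p 0) * (\<Prod>i<N - 1. P $ (p i) $ (p (Suc i)))"

definition paths :: "nat \<Rightarrow> (nat \<Rightarrow> 'n) set" where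
  "paths N = PiE {..<N} (\<lambda>_. UNIV)"

definition path_expect :: "real^'n \<Rightarrow> real^'n^'n \<Rightarrow> nat \<Rightarrow> ((nat \<Rightarrow> 'n) \<Rightarrow> real) \<Rightarrow> real" where
  "path_expect \<pi> P N g = (\<Sum>p\<in>paths N. path_weight \<pi> P N p * g p)"

definition sum_variance :: "real^'n \<Rightarrow> real^'n^'n \<Rightarrow> ('n \<Rightarrow> real) \<Rightarrow> nat \<Rightarrow> real" where
  "sum_variance \<pi> P f N =
     path_expect \<pi> P N (\<lambda>p. (\<Sum>i<N. f (p i))\<^sup>2) - (path_expect \<pi> P N (\<lambda>p. \<Sum>i<N. f (p i)))\<^sup>2"

definition asym_var :: "real^'n \<Rightarrow> ('n \<Rightarrow> real) \<Rightarrow> real^'n^'n \<Rightarrow> real" where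
  "asym_var \<pi> f P = lim (\<lambda>N. sum_variance \<pi> P f N / real N)"

definition efficiency_dominates :: "real^'n \<Rightarrow> real^'n^'n \<Rightarrow> real^'n^'n \<Rightarrow> bool" where
  "efficiency_dominates \<pi> P Q \<longleftrightarrow> (\<forall>f. asym_var \<pi> f P \<le> asym_var \<pi> f Q)"

definition cmat :: "real^'n^'n \<Rightarrow> complex^'n^'n" where
  "cmat M = (\<chi> i j. complex_of_real (M $ i $ j))"

definition is_eigenvalue :: "real^'n^'n \<Rightarrow> complex \<Rightarrow> bool" where
  "is_eigenvalue M c \<longleftrightarrow> (\<exists>v::complex^'n. v \<noteq> 0 \<and> cmat M *v v = c *s v)"

definition eigenvalues_nonneg :: "real^'n^'n \<Rightarrow> bool" where
  "eigenvalues_nonneg M \<longleftrightarrow> (\<forall>c. is_eigenvalue M c \<longrightarrow> c \<in> \<real> \<and> Re c \<ge> 0)"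

end

theory Submission
  imports Defs
begin

definition opm :: "real^'n^'n \<Rightarrow> ('n \<Rightarrow> real) \<Rightarrow> ('n \<Rightarrow> real)" where
  "opm M u = (\<lambda>x. \<Sum>y\<in>UNIV. M $ x $ y * u y)"

definition ip :: "real^'n \<Rightarrow> ('n \<Rightarrow> real) \<Rightarrow> ('n \<Rightarrow> real) \<Rightarrow> real" where
  "ip \<pi> u v = (\<Sum>x\<in>UNIV. \<pi> $ x * u x * v x)"

lemma ip_sym: "ip \<pi> u v = ip \<pi> v u"
  unfolding ip_def by (simp add: mult_ac)

lemma ip_add_left: "ip \<pi> (\<lambda>x. u x + w x) v = ip \<pi> u v + ip \<pi> w v"
  unfolding ip_def by (simp add: algebra_simps sum.distrib)
lemma ip_add_right: "ip \<pi> v (\<lambda>x. u x + w x) = ip \<pi> v u + ip \<pi> v w"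
  unfolding ip_def by (simp add: algebra_simps sum.distrib)
lemma ip_diff_left: "ip \<pi> (\<lambda>x. u x - w x) v = ip \<pi> u v - ip \<pi> w v"
  unfolding ip_def by (simp add: algebra_simps sum_subtractf)
lemma ip_diff_right: "ip \<pi> v (\<lambda>x. u x - w x) = ip \<pi> v u - ip \<pi> v w"
  unfolding ip_def by (simp add: algebra_simps sum_subtractf)
lemma ip_scale_left: "ip \<pi> (\<lambda>x. c * u x) v = c * ip \<pi> u v"
  unfolding ip_def by (simp add: algebra_simps sum_distrib_left)
lemma ip_scale_right: "ip \<pi> v (\<lambda>x. c * u x) = c * ip \<pi> v u"
  unfolding ip_def by (simp add: algebra_simps sum_distrib_left)

lemma opm_add: "opm M (\<lambda>x. u x + w x) = (\<lambda>x. opm M u x + opm M w x)"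
  unfolding opm_def by (simp add: algebra_simps sum.distrib)
lemma opm_diff: "opm M (\<lambda>x. u x - w x) = (\<lambda>x. opm M u x - opm M w x)"
  unfolding opm_def by (simp add: algebra_simps sum_subtractf)
lemma opm_const: "transition_matrix P \<Longrightarrow> opm P (\<lambda>_. c) = (\<lambda>_. c)"
  unfolding opm_def transition_matrix_def by (simp add: sum_distrib_right[symmetric])

lemma opk_add: "(opm M ^^ k) (\<lambda>x. u x + w x) = (\<lambda>x. (opm M ^^ k) u x + (opm M ^^ k) w x)"
  by (induction k) (simp_all add: opm_add)
lemma opk_diff: "(opm M ^^ k) (\<lambda>x. u x - w x) = (\<lambda>x. (opm M ^^ k) u x - (opm M ^^ k) w x)"
  by (induction k) (simp_all add: opm_diff)
lemma opk_const: "transition_matrix P \<Longrightarrow> (opm P ^^ k) (\<lambda>_. c) = (\<lambda>_. c)"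
  by (induction k) (simp_all add: opm_const)

definition symm :: "real^'n \<Rightarrow> real^'n^'n \<Rightarrow> bool" where
  "symm \<pi> M \<longleftrightarrow> (\<forall>x y. \<pi> $ x * M $ x $ y = \<pi> $ y * M $ y $ x)"

lemma selfadj:
  assumes "symm \<pi> M"
  shows "ip \<pi> u (opm M v) = ip \<pi> (opm M u) v"
proof -
  have "ip \<pi> u (opm M v) = (\<Sum>x\<in>UNIV. \<Sum>y\<in>UNIV. (\<pi> $ x * M $ x $ y) * u x * v y)"
    unfolding ip_def opm_def by (simp add: sum_distrib_left sum_distrib_right mult_ac)
  also have "\<dots> = (\<Sum>x\<in>UNIV. \<Sum>y\<in>UNIV. (\<pi> $ y * M $ y $ x) * u x * v y)"
    using assms unfolding symm_def by simp
  also have "\<dots> = (\<Sum>y\<in>UNIV. \<Sum>x\<in>UNIV. (\<pi> $ y * M $ y $ x) * u x * v y)"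
    by (rule sum.swap)
  also have "\<dots> = ip \<pi> (opm M u) v"
    unfolding ip_def opm_def by (simp add: sum_distrib_left sum_distrib_right mult_ac)
  finally show ?thesis .
qed

lemma stationary:
  assumes "symm \<pi> P" "transition_matrix P"
  shows "ip \<pi> (\<lambda>_. 1) (opm P u) = ip \<pi> (\<lambda>_. 1) u"
  using selfadj[OF assms(1), of "\<lambda>_. 1" u] opm_const[OF assms(2), of 1] by simp

lemma dirichlet:
  assumes "symm \<pi> P" "transition_matrix P"
  shows "2 * (ip \<pi> u u - ip \<pi> u (opm P u)) = (\<Sum>x\<in>UNIV. \<Sum>y\<in>UNIV. \<pi> $ x * P $ x $ y * (u x - u y)^2)"
proof -
  have r: "\<And>x. (\<Sum>y\<in>UNIV. P $ x $ y) = 1" using assms(2) unfolding transition_matrix_def by blast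
  have "(\<Sum>x\<in>UNIV. \<Sum>y\<in>UNIV. \<pi> $ x * P $ x $ y * (u x - u y)^2)
      = (\<Sum>x\<in>UNIV. \<Sum>y\<in>UNIV. \<pi> $ x * P $ x $ y * (u x)^2)
      + (\<Sum>x\<in>UNIV. \<Sum>y\<in>UNIV. \<pi> $ x * P $ x $ y * (u y)^2)
      - 2 * (\<Sum>x\<in>UNIV. \<Sum>y\<in>UNIV. \<pi> $ x * P $ x $ y * u x * u y)"
    by (simp add: power2_diff algebra_simps sum.distrib sum_subtractf sum_distrib_left)
  also have "(\<Sum>x\<in>UNIV. \<Sum>y\<in>UNIV. \<pi> $ x * P $ x $ y * (u x)^2) = ip \<pi> u u"
    unfolding ip_def using r by (simp add: sum_distrib_left[symmetric] sum_distrib_right[symmetric] power2_eq_square mult_ac)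
  also have "(\<Sum>x\<in>UNIV. \<Sum>y\<in>UNIV. \<pi> $ x * P $ x $ y * (u y)^2) = (\<Sum>x\<in>UNIV. \<Sum>y\<in>UNIV. \<pi> $ y * P $ y $ x * (u y)^2)"
    using assms(1) unfolding symm_def by simp
  also have "\<dots> = (\<Sum>y\<in>UNIV. \<Sum>x\<in>UNIV. \<pi> $ y * P $ y $ x * (u y)^2)" by (rule sum.swap)
  also have "\<dots> = ip \<pi> u u"
    unfolding ip_def using r by (simp add: sum_distrib_left[symmetric] sum_distrib_right[symmetric] power2_eq_square mult_ac)
  also have "(\<Sum>x\<in>UNIV. \<Sum>y\<in>UNIV. \<pi> $ x * P $ x $ y * u x * u y) = ip \<pi> u (opm P u)"
    unfolding ip_def opm_def by (simp add: sum_distrib_left mult_ac)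
  finally show ?thesis by simp
qed

lemma psd_trans:
  assumes "symm \<pi> P" "transition_matrix P" "\<forall>x. \<pi> $ x > 0"
  shows "ip \<pi> u (opm P u) \<le> ip \<pi> u u"
proof -
  have "0 \<le> (\<Sum>x\<in>UNIV. \<Sum>y\<in>UNIV. \<pi> $ x * P $ x $ y * (u x - u y)^2)"
    using assms(2,3) unfolding transition_matrix_def
    by (intro sum_nonneg mult_nonneg_nonneg) (auto intro: less_imp_le)
  with dirichlet[OF assms(1,2), of u] show ?thesis by simp
qed

lemma paths_Suc: "paths (Suc m) = (\<lambda>(y, g). g(m := y)) ` (UNIV \<times> paths m)"
  unfolding paths_def lessThan_Suc by (simp add: PiE_insert_eq)

lemma paths_inj: "inj_on (\<lambda>(y, g). g(m := y)) (UNIV \<times> (paths m :: (nat \<Rightarrow> 'n) set))"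
  unfolding paths_def using inj_combinator[of m "{..<m}" "\<lambda>_. UNIV :: 'n set"] by simp

lemma sum_paths_Suc:
  "(\<Sum>p\<in>paths (Suc m). G p) = (\<Sum>y\<in>(UNIV::'n::finite set). \<Sum>p\<in>paths m. G (p(m := y)))"
proof -
  have "(\<Sum>p\<in>paths (Suc m). G p) = (\<Sum>q\<in>UNIV \<times> paths m. G ((\<lambda>(y, g). g(m := y)) q))"
    unfolding paths_Suc by (rule sum.reindex[OF paths_inj, unfolded comp_def])
  also have "\<dots> = (\<Sum>y\<in>UNIV. \<Sum>p\<in>paths m. G (p(m := y)))"
    by (simp add: sum.cartesian_product case_prod_beta)
  finally show ?thesis .
qed

lemma finite_paths: "finite (paths m :: (nat \<Rightarrow> 'n::finite) set)"
  unfolding paths_def by (simp add: finite_PiE)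

lemma weight_upd:
  assumes "m \<ge> 1"
  shows "path_weight \<pi> P (Suc m) (p(m := y)) = path_weight \<pi> P m p * P $ (p (m - 1)) $ y"
proof -
  obtain m' where m: "m = Suc m'" using assms by (cases m) auto
  have "(\<Prod>i<m. P $ ((p(m := y)) i) $ ((p(m := y)) (Suc i)))
      = (\<Prod>i<m'. P $ (p i) $ (p (Suc i))) * P $ (p m') $ y"
    unfolding m by (simp add: prod.lessThan_Suc)
  then show ?thesis unfolding path_weight_def using m by simp
qed

lemma last_step:
  assumes "m \<ge> 1" "\<And>p y. F (p(m := y)) = F p"
  shows "path_expect \<pi> P (Suc m) (\<lambda>p. F p * K (p m))
       = path_expect \<pi> P m (\<lambda>p. F p * opm P K (p (m - 1)))"
proof -
  have "path_expect \<pi> P (Suc m) (\<lambda>p. F p * K (p m))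
     = (\<Sum>y\<in>UNIV. \<Sum>p\<in>paths m. path_weight \<pi> P m p * P $ (p (m - 1)) $ y * (F p * K y))"
    unfolding path_expect_def sum_paths_Suc using assms by (simp add: weight_upd)
  also have "\<dots> = (\<Sum>p\<in>paths m. \<Sum>y\<in>UNIV. path_weight \<pi> P m p * P $ (p (m - 1)) $ y * (F p * K y))"
    by (rule sum.swap)
  also have "\<dots> = path_expect \<pi> P m (\<lambda>p. F p * opm P K (p (m - 1)))"
    unfolding path_expect_def opm_def by (simp add: sum_distrib_left mult_ac)
  finally show ?thesis .
qed

lemma first_step:
  "path_expect \<pi> P (Suc 0) (\<lambda>p. G (p 0)) = (\<Sum>x\<in>UNIV. \<pi> $ x * G x)"
  unfolding path_expect_def sum_paths_Suc by (simp add: path_weight_def paths_def)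

lemma one_point:
  assumes "symm \<pi> P" "transition_matrix P"
  shows "path_expect \<pi> P (Suc m) (\<lambda>p. G (p m)) = (\<Sum>x\<in>UNIV. \<pi> $ x * G x)"
proof (induction m arbitrary: G)
  case 0
  then show ?case by (rule first_step)
next
  case (Suc m)
  have "path_expect \<pi> P (Suc (Suc m)) (\<lambda>p. G (p (Suc m)))
      = path_expect \<pi> P (Suc (Suc m)) (\<lambda>p. 1 * G (p (Suc m)))" by simp
  also have "\<dots> = path_expect \<pi> P (Suc m) (\<lambda>p. 1 * opm P G (p m))"
    by (subst last_step) auto
  also have "\<dots> = (\<Sum>x\<in>UNIV. \<pi> $ x * opm P G x)" using Suc by simp
  also have "\<dots> = ip \<pi> (\<lambda>_. 1) (opm P G)" unfolding ip_def by simp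
  also have "\<dots> = ip \<pi> (\<lambda>_. 1) G" by (rule stationary[OF assms])
  finally show ?case unfolding ip_def by simp
qed

lemma two_point:
  assumes "symm \<pi> P" "transition_matrix P"
  shows "path_expect \<pi> P (Suc (i + d)) (\<lambda>p. h (p i) * k (p (i + d))) = ip \<pi> h ((opm P ^^ d) k)"
proof (induction d arbitrary: k)
  case 0
  show ?case using one_point[OF assms, of i "\<lambda>x. h x * k x"] unfolding ip_def by (simp add: mult_ac)
next
  case (Suc d)
  have "path_expect \<pi> P (Suc (i + Suc d)) (\<lambda>p. h (p i) * k (p (i + Suc d)))
      = path_expect \<pi> P (Suc (i + d)) (\<lambda>p. h (p i) * opm P k (p (i + d)))"
    by (subst last_step) auto
  also have "\<dots> = ip \<pi> h ((opm P ^^ d) (opm P k))" by (rule Suc)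
  also have "\<dots> = ip \<pi> h ((opm P ^^ Suc d) k)" by (simp add: funpow_swap1)
  finally show ?case .
qed

lemma extend:
  assumes "transition_matrix P" "m \<ge> 1" "\<And>p y. F (p(m := y)) = F p"
  shows "path_expect \<pi> P (Suc m) F = path_expect \<pi> P m F"
  using last_step[OF assms(2,3), of \<pi> P "\<lambda>_. 1"] opm_const[OF assms(1), of 1] by simp

lemma two_point_gen:
  assumes "symm \<pi> P" "transition_matrix P" "i \<le> j" "j < N"
  shows "path_expect \<pi> P N (\<lambda>p. h (p i) * k (p j)) = ip \<pi> h ((opm P ^^ (j - i)) k)"
  using assms(4)
proof (induction N)
  case 0 then show ?case by simp
next
  case (Suc N)
  show ?case
  proof (cases "j = N")
    case True
    then show ?thesis using two_point[OF assms(1,2), of i "j - i" h k] assms(3) by simp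
  next
    case False
    then have "j < N" using Suc by simp
    have "path_expect \<pi> P (Suc N) (\<lambda>p. h (p i) * k (p j)) = path_expect \<pi> P N (\<lambda>p. h (p i) * k (p j))"
      using \<open>j < N\<close> assms(3) by (intro extend[OF assms(2)]) auto
    then show ?thesis using Suc.IH \<open>j < N\<close> by simp
  qed
qed

lemma path_expect_sum:
  "path_expect \<pi> P N (\<lambda>p. \<Sum>i\<in>I. G i p) = (\<Sum>i\<in>I. path_expect \<pi> P N (G i))"
  unfolding path_expect_def by (simp add: sum_distrib_left sum.swap[of _ I])

lemma stationary_k:
  assumes "symm \<pi> P" "transition_matrix P"
  shows "ip \<pi> (\<lambda>_. 1) ((opm P ^^ k) u) = ip \<pi> (\<lambda>_. 1) u"
  by (induction k) (simp_all add: stationary[OF assms])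

lemma double_sum_lemma:
  fixes c e :: "nat \<Rightarrow> real"
  assumes "\<And>d. c d = e d - 2 * e (Suc d) + e (Suc (Suc d))"
  shows "(\<Sum>i<N. \<Sum>j<N. c (if i \<le> j then j - i else i - j))
         = real N * (e 0 - e 2) - 2 * (e 1 - e (Suc N))"
proof -
  have S: "(\<Sum>i<N. c (N - i)) = (e 1 - e 2) - (e (Suc N) - e (Suc (Suc N)))" for N
  proof (induction N)
    case 0 then show ?case by (simp add: numeral_2_eq_2)
  next
    case (Suc N)
    have "(\<Sum>i<Suc N. c (Suc N - i)) = c (Suc N) + (\<Sum>i<N. c (N - i))"
      by (subst sum.lessThan_Suc_shift) simp
    then show ?case using Suc assms[of "Suc N"] by (simp add: numeral_2_eq_2)
  qed
  show ?thesis
  proof (induction N)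
    case 0 then show ?case by simp
  next
    case (Suc N)
    have "(\<Sum>i<Suc N. \<Sum>j<Suc N. c (if i \<le> j then j - i else i - j))
        = (\<Sum>i<N. \<Sum>j<N. c (if i \<le> j then j - i else i - j))
          + (\<Sum>i<N. c (N - i)) + (\<Sum>j<N. c (N - j)) + c 0"
      by (simp add: sum.distrib)
    also have "\<dots> = real N * (e 0 - e 2) - 2 * (e 1 - e (Suc N)) + 2 * ((e 1 - e 2) - (e (Suc N) - e (Suc (Suc N)))) + c 0"
      using Suc S[of N] by simp
    finally show ?case using assms[of 0] by (simp add: algebra_simps numeral_2_eq_2)
  qed
qed

lemma var_formula:
  assumes pd: "prob_dist \<pi>" and sy: "symm \<pi> P" and tm: "transition_matrix P"
    and mu: "\<mu> = ip \<pi> (\<lambda>_. 1) f"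
    and fg: "\<And>x. f x = \<mu> + g x - opm P g x"
  shows "sum_variance \<pi> P f N = real N * (ip \<pi> g g - ip \<pi> g ((opm P ^^ 2) g))
           - 2 * (ip \<pi> g (opm P g) - ip \<pi> g ((opm P ^^ Suc N) g))"
proof -
  define Q where "Q = opm P"
  define e where "e k = ip \<pi> g ((Q ^^ k) g)" for k
  define mm where "mm d = ip \<pi> f ((Q ^^ d) f)" for d
  have one: "ip \<pi> (\<lambda>_. 1) (\<lambda>_. 1) = 1" using pd unfolding prob_dist_def ip_def by simp
  have feq: "f = (\<lambda>x. \<mu> + (g x - Q g x))" using fg unfolding Q_def by (auto simp: fun_eq_iff)
  have ipf: "ip \<pi> f w = \<mu> * ip \<pi> (\<lambda>_. 1) w + ip \<pi> g w - ip \<pi> g (Q w)" for w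
  proof -
    have "ip \<pi> f w = ip \<pi> (\<lambda>_. \<mu>) w + (ip \<pi> g w - ip \<pi> (Q g) w)"
      unfolding feq by (simp add: ip_add_left ip_diff_left)
    also have "ip \<pi> (\<lambda>_. \<mu>) w = \<mu> * ip \<pi> (\<lambda>_. 1) w" unfolding ip_def by (simp add: sum_distrib_left mult_ac)
    also have "ip \<pi> (Q g) w = ip \<pi> g (Q w)" unfolding Q_def by (rule selfadj[OF sy, symmetric])
    finally show ?thesis by simp
  qed
  have gam: "ip \<pi> (\<lambda>_. 1) ((Q ^^ k) g) = ip \<pi> (\<lambda>_. 1) g" for k
    unfolding Q_def by (rule stationary_k[OF sy tm])
  have Qkf: "(Q ^^ k) f = (\<lambda>x. \<mu> + ((Q ^^ k) g x - (Q ^^ Suc k) g x))" for k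
  proof -
    have "(Q ^^ k) f = (\<lambda>x. (Q ^^ k) (\<lambda>_. \<mu>) x + ((Q ^^ k) g x - (Q ^^ k) (Q g) x))"
      unfolding feq by (simp add: opk_add opk_diff Q_def)
    also have "(Q ^^ k) (\<lambda>_. \<mu>) = (\<lambda>_. \<mu>)" unfolding Q_def by (rule opk_const[OF tm])
    also have "(Q ^^ k) (Q g) = (Q ^^ Suc k) g" by (simp add: funpow_swap1)
    finally show ?thesis .
  qed
  have mmc: "mm d - \<mu>^2 = e d - 2 * e (Suc d) + e (Suc (Suc d))" for d
  proof -
    have "mm d = ip \<pi> f (\<lambda>_. \<mu>) + (ip \<pi> f ((Q ^^ d) g) - ip \<pi> f ((Q ^^ Suc d) g))"
      unfolding mm_def Qkf by (simp add: ip_add_right ip_diff_right)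
    also have "ip \<pi> f (\<lambda>_. \<mu>) = \<mu> * \<mu>"
      using mu unfolding ip_def by (simp add: sum_distrib_right mult_ac)
    finally show ?thesis unfolding ipf gam e_def by (simp add: power2_eq_square)
  qed
  have E2: "path_expect \<pi> P N (\<lambda>p. f (p i) * f (p j)) = mm (if i \<le> j then j - i else i - j)"
    if "i < N" "j < N" for i j
  proof (cases "i \<le> j")
    case True
    then show ?thesis using two_point_gen[OF sy tm True \<open>j < N\<close>, of f f] unfolding mm_def Q_def by simp
  next
    case False
    have "path_expect \<pi> P N (\<lambda>p. f (p i) * f (p j)) = path_expect \<pi> P N (\<lambda>p. f (p j) * f (p i))"
      by (simp add: mult.commute)
    then show ?thesis using False two_point_gen[OF sy tm _ \<open>i < N\<close>, of j f f] unfolding mm_def Q_def by simp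
  qed
  have E1: "path_expect \<pi> P N (\<lambda>p. f (p i)) = \<mu>" if "i < N" for i
    using two_point_gen[OF sy tm order_refl that, of f "\<lambda>_. 1"] mu ip_sym[of \<pi> f] by simp
  have sq: "(\<lambda>p. (\<Sum>i<N. f (p i))^2) = (\<lambda>p. \<Sum>i<N. \<Sum>j<N. f (p i) * f (p j))"
    by (simp add: power2_eq_square sum_product)
  have "sum_variance \<pi> P f N = (\<Sum>i<N. \<Sum>j<N. mm (if i \<le> j then j - i else i - j)) - (real N * \<mu>)^2"
    unfolding sum_variance_def sq path_expect_sum
    using E1 E2 by simp
  also have "\<dots> = (\<Sum>i<N. \<Sum>j<N. (mm (if i \<le> j then j - i else i - j) - \<mu>^2))"
    by (simp add: sum_subtractf power_mult_distrib power2_eq_square)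
  also have "\<dots> = real N * (e 0 - e 2) - 2 * (e 1 - e (Suc N))"
    by (rule double_sum_lemma) (rule mmc)
  finally show ?thesis unfolding e_def Q_def by simp
qed

lemma opk_bound:
  assumes tm: "transition_matrix P" and b: "\<And>y. \<bar>u y\<bar> \<le> B"
  shows "\<bar>(opm P ^^ k) u x\<bar> \<le> B"
proof (induction k arbitrary: x)
  case 0 then show ?case using b by simp
next
  case (Suc k)
  have "\<bar>(opm P ^^ Suc k) u x\<bar> = \<bar>\<Sum>y\<in>UNIV. P $ x $ y * (opm P ^^ k) u y\<bar>"
    by (simp add: opm_def)
  also have "\<dots> \<le> (\<Sum>y\<in>UNIV. \<bar>P $ x $ y * (opm P ^^ k) u y\<bar>)" by (rule sum_abs)
  also have "\<dots> \<le> (\<Sum>y\<in>UNIV. P $ x $ y * B)"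
    using tm Suc unfolding transition_matrix_def
    by (intro sum_mono) (simp add: abs_mult mult_left_mono)
  also have "\<dots> = B" using tm unfolding transition_matrix_def by (simp add: sum_distrib_right[symmetric])
  finally show ?case .
qed

lemma asym_var_formula:
  assumes pd: "prob_dist \<pi>" and sy: "symm \<pi> P" and tm: "transition_matrix P"
    and mu: "\<mu> = ip \<pi> (\<lambda>_. 1) f"
    and fg: "\<And>x. f x = \<mu> + g x - opm P g x"
  shows "asym_var \<pi> f P = ip \<pi> g g - ip \<pi> g ((opm P ^^ 2) g)"
proof -
  define v where "v = ip \<pi> g g - ip \<pi> g ((opm P ^^ 2) g)"
  define e where "e k = ip \<pi> g ((opm P ^^ k) g)" for k
  define B where "B = (\<Sum>y\<in>UNIV. \<bar>g y\<bar>)"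
  define C where "C = (\<Sum>x\<in>UNIV. \<pi> $ x * \<bar>g x\<bar> * B)"
  have gb: "\<bar>g y\<bar> \<le> B" for y unfolding B_def by (rule member_le_sum) auto
  have pos: "\<pi> $ x \<ge> 0" for x using pd unfolding prob_dist_def by (simp add: less_imp_le)
  have eb: "\<bar>e k\<bar> \<le> C" for k
  proof -
    have "\<bar>e k\<bar> \<le> (\<Sum>x\<in>UNIV. \<bar>\<pi> $ x * g x * (opm P ^^ k) g x\<bar>)" unfolding e_def ip_def by (rule sum_abs)
    also have "\<dots> \<le> C" unfolding C_def
      using pos opk_bound[OF tm gb]
      by (intro sum_mono) (simp add: abs_mult mult_left_mono mult_nonneg_nonneg)
    finally show ?thesis .
  qed
  have lim0: "(\<lambda>N. 2 * (e 1 - e (Suc N)) / real N) \<longlonglongrightarrow> 0"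
  proof (rule Lim_null_comparison)
    show "\<forall>\<^sub>F N in sequentially. norm (2 * (e 1 - e (Suc N)) / real N) \<le> 4 * C / real N"
    proof (rule always_eventually, rule allI)
      fix N
      have "\<bar>2 * (e 1 - e (Suc N))\<bar> \<le> 4 * C" using eb[of 1] eb[of "Suc N"] by (simp add: abs_le_iff)
      then show "norm (2 * (e 1 - e (Suc N)) / real N) \<le> 4 * C / real N"
        by (simp add: divide_right_mono)
    qed
    show "(\<lambda>N. 4 * C / real N) \<longlonglongrightarrow> 0" by (rule lim_const_over_n)
  qed
  have "(\<lambda>N. v - 2 * (e 1 - e (Suc N)) / real N) \<longlonglongrightarrow> v - 0"
    by (intro tendsto_intros lim0)
  then have L: "(\<lambda>N. v - 2 * (e 1 - e (Suc N)) / real N) \<longlonglongrightarrow> v" by simp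
  have ev: "\<forall>\<^sub>F N in sequentially. v - 2 * (e 1 - e (Suc N)) / real N = sum_variance \<pi> P f N / real N"
    unfolding eventually_sequentially
  proof (intro exI allI impI)
    fix N :: nat assume "N \<ge> 1"
    then show "v - 2 * (e 1 - e (Suc N)) / real N = sum_variance \<pi> P f N / real N"
      unfolding var_formula[OF pd sy tm mu fg] v_def e_def by (simp add: field_simps)
  qed
  have "(\<lambda>N. sum_variance \<pi> P f N / real N) \<longlonglongrightarrow> v"
    by (rule Lim_transform_eventually[OF L ev])
  then show ?thesis unfolding asym_var_def v_def by (rule limI)
qed

lemma mpow_nonneg:
  assumes "transition_matrix P"
  shows "mpow P m $ x $ y \<ge> 0"
proof (induction m arbitrary: y)
  case 0 then show ?case by (simp add: mat_def)
next
  case (Suc m)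
  then show ?case using assms unfolding transition_matrix_def
    by (simp add: matrix_matrix_mult_def sum_nonneg)
qed

lemma mpow_const:
  assumes tm: "transition_matrix P" and E: "\<And>x y. P $ x $ y > 0 \<Longrightarrow> u x = u y"
  shows "mpow P m $ x $ y > 0 \<Longrightarrow> u x = u y"
proof (induction m arbitrary: y)
  case 0 then show ?case by (simp add: mat_def split: if_splits)
next
  case (Suc m)
  have "0 < (\<Sum>z\<in>UNIV. mpow P m $ x $ z * P $ z $ y)"
    using Suc.prems by (simp add: matrix_matrix_mult_def)
  then obtain z where z: "0 < mpow P m $ x $ z * P $ z $ y"
    by (metis (no_types, lifting) not_le sum_nonpos)
  have "mpow P m $ x $ z \<ge> 0" "P $ z $ y \<ge> 0"
    using mpow_nonneg[OF tm] tm unfolding transition_matrix_def by auto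
  with z have "mpow P m $ x $ z > 0" "P $ z $ y > 0"
    by (auto simp: zero_less_mult_iff)
  then show ?case using Suc.IH E by metis
qed

lemma kernel_const:
  assumes pd: "prob_dist \<pi>" and sy: "symm \<pi> P" and tm: "transition_matrix P"
    and irr: "irreducible_chain P" and fx: "\<And>x. opm P u x = u x"
  shows "u x = u y"
proof -
  have pos: "\<pi> $ x > 0" for x using pd unfolding prob_dist_def by simp
  have "ip \<pi> u (opm P u) = ip \<pi> u u" proof -
    have "opm P u = u" using fx by (simp add: fun_eq_iff)
    then show ?thesis by simp
  qed
  then have "(\<Sum>x\<in>UNIV. \<Sum>y\<in>UNIV. \<pi> $ x * P $ x $ y * (u x - u y)^2) = 0"
    using dirichlet[OF sy tm, of u] by simp
  moreover have nn: "0 \<le> \<pi> $ x * P $ x $ y * (u x - u y)^2" for x y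
    using pos[of x] tm unfolding transition_matrix_def by (simp add: less_imp_le)
  ultimately have "\<forall>x. (\<Sum>y\<in>UNIV. \<pi> $ x * P $ x $ y * (u x - u y)^2) = 0"
    by (subst (asm) sum_nonneg_eq_0_iff) (auto intro: sum_nonneg)
  then have "\<pi> $ x * P $ x $ y * (u x - u y)^2 = 0" for x y
    using nn by (simp add: sum_nonneg_eq_0_iff) blast
  then have E: "\<And>a b. P $ a $ b > 0 \<Longrightarrow> u a = u b" using pos by (simp, metis less_irrefl)
  obtain m where "mpow P m $ x $ y > 0" using irr unfolding irreducible_chain_def by blast
  then show ?thesis using mpow_const[of P u m x y] tm E by blast
qed

lemma poisson:
  assumes pd: "prob_dist \<pi>" and sy: "symm \<pi> P" and tm: "transition_matrix P"
    and irr: "irreducible_chain P" and h0: "ip \<pi> (\<lambda>_. 1) h = 0"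
  shows "\<exists>g. \<forall>x. h x = g x - opm P g x"
proof -
  have one: "ip \<pi> (\<lambda>_. 1) (\<lambda>_. c) = c" for c
    using pd unfolding prob_dist_def ip_def by (simp add: sum_distrib_right[symmetric])
  define T :: "real^'a \<Rightarrow> real^'a" where
    "T v = (\<chi> x. v $ x - opm P (vec_nth v) x + ip \<pi> (\<lambda>_. 1) (vec_nth v))" for v
  have lin: "linear T"
  proof (rule linearI)
    fix v w :: "real^'a"
    show "T (v + w) = T v + T w"
      unfolding T_def vec_eq_iff
      by (simp add: opm_def ip_def algebra_simps sum.distrib)
  next
    fix r and v :: "real^'a"
    show "T (r *\<^sub>R v) = r *\<^sub>R T v"
      unfolding T_def vec_eq_iff
      by (simp add: opm_def ip_def algebra_simps sum_distrib_left)
  qed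
  have "inj T"
    unfolding linear_injective_0[OF lin]
  proof (intro allI impI)
    fix v :: "real^'a" assume Tv: "T v = 0"
    define u where "u = vec_nth v"
    define c where "c = ip \<pi> (\<lambda>_. 1) u"
    have eq: "u x - opm P u x + c = 0" for x
      using Tv unfolding T_def u_def c_def vec_eq_iff by simp
    have "ip \<pi> (\<lambda>_. 1) (\<lambda>x. (u x - opm P u x) + c) = 0"
      using eq by (simp add: ip_def)
    then have "c = 0"
      by (simp add: ip_add_right ip_diff_right stationary[OF sy tm] one)
    then have "opm P u x = u x" for x using eq[of x] by simp
    then have uc: "u x = u y" for x y by (rule kernel_const[OF pd sy tm irr])
    have "c = u x" for x
    proof -
      have "u = (\<lambda>_. u x)" using uc by (auto simp: fun_eq_iff)
      then show ?thesis unfolding c_def by (metis one)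
    qed
    with \<open>c = 0\<close> have "u x = 0" for x by simp
    then show "v = 0" unfolding u_def by (simp add: vec_eq_iff)
  qed
  then have "surj T" by (rule linear_inj_imp_surj[OF lin])
  then obtain v where Tv: "T v = vec_lambda h" by (metis surjD)
  define u where "u = vec_nth v"
  define c where "c = ip \<pi> (\<lambda>_. 1) u"
  have eq: "u x - opm P u x + c = h x" for x
    using Tv unfolding T_def u_def c_def vec_eq_iff by simp
  have "ip \<pi> (\<lambda>_. 1) (\<lambda>x. (u x - opm P u x) + c) = 0"
    using eq h0 by (simp add: ip_def)
  then have "c = 0"
    by (simp add: ip_add_right ip_diff_right stationary[OF sy tm] one)
  then show ?thesis using eq by (metis add.right_neutral)
qed

lemma term_nonneg:
  fixes p :: real
  assumes "p > 0" shows "0 \<le> p * c * c"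
proof -
  have "0 \<le> p * (c * c)" using assms by (simp add: mult_nonneg_nonneg less_imp_le)
  then show ?thesis by (simp add: mult.assoc)
qed

lemma ip_self_nonneg:
  assumes "\<forall>x. \<pi> $ x > 0"
  shows "0 \<le> ip \<pi> u u"
  unfolding ip_def using assms by (intro sum_nonneg) (simp add: term_nonneg)

lemma ip_self_zero:
  assumes "\<forall>x. \<pi> $ x > 0" "ip \<pi> u u = 0"
  shows "u x = 0"
proof -
  have "\<forall>x\<in>UNIV. \<pi> $ x * u x * u x = 0"
    using assms(2) unfolding ip_def
  proof (subst (asm) sum_nonneg_eq_0_iff)
    show "finite (UNIV :: 'a set)" by simp
    show "\<And>x. x \<in> UNIV \<Longrightarrow> 0 \<le> \<pi> $ x * u x * u x" using assms(1) term_nonneg by blast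
  qed
  then have "\<pi> $ x * u x * u x = 0" by blast
  moreover have "\<pi> $ x \<noteq> 0" using assms(1) by (metis less_irrefl)
  ultimately show ?thesis by simp
qed

lemma ip_self_pos:
  assumes "\<forall>x. \<pi> $ x > 0" "u x \<noteq> 0"
  shows "0 < ip \<pi> u u"
  using ip_self_nonneg[OF assms(1), of u] ip_self_zero[OF assms(1), of u x] assms(2) by linarith

lemma opm_scale: "opm M (\<lambda>x. c * u x) = (\<lambda>x. c * opm M u x)"
  unfolding opm_def by (simp add: sum_distrib_left mult_ac)

lemma quad:
  fixes a b :: real
  assumes "a \<ge> 0" "\<And>t. 0 \<le> 2 * t * b + t^2 * a"
  shows "b = 0"
proof (rule ccontr)
  assume "b \<noteq> 0"
  define t where "t = - b / (a + 1)"
  have "0 \<le> (2 * t * b + t^2 * a) * (a + 1)^2" using assms(2)[of t] by simp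
  also have "(2 * t * b + t^2 * a) * (a + 1)^2 = -(b^2 * (a + 2))"
  proof -
    have ta: "t * (a + 1) = - b" unfolding t_def using assms(1) by simp
    have "(2 * t * b + t^2 * a) * (a + 1)^2 = 2 * b * (t * (a + 1)) * (a + 1) + a * (t * (a + 1))^2"
      by (simp add: algebra_simps power2_eq_square)
    also have "\<dots> = -(b^2 * (a + 2))" unfolding ta by (simp add: algebra_simps power2_eq_square)
    finally show ?thesis .
  qed
  finally have "0 \<le> -(b^2 * (a + 2))" .
  moreover have "b^2 * (a + 2) > 0" using \<open>b \<noteq> 0\<close> assms(1) by simp
  ultimately show False by linarith
qed

lemma eigen_psd:
  assumes pos: "\<forall>x. \<pi> $ x > 0" and sy: "symm \<pi> M" and ev: "eigenvalues_nonneg M"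
  shows "0 \<le> ip \<pi> w (opm M w)"
proof -
  define q :: "real^'a \<Rightarrow> real" where
    "q v = ip \<pi> (vec_nth v) (opm M (vec_nth v)) / ip \<pi> (vec_nth v) (vec_nth v)" for v
  have cont: "continuous_on (sphere 0 1) q"
  proof -
    have den: "ip \<pi> (vec_nth v) (vec_nth v) \<noteq> 0" if "v \<in> sphere 0 1" for v
    proof -
      from that have "v \<noteq> 0" by auto
      then obtain x where "v $ x \<noteq> 0" by (auto simp: vec_eq_iff)
      then show ?thesis using ip_self_pos[OF pos, of "vec_nth v" x] by simp
    qed
    have c1: "continuous_on (sphere 0 1) (\<lambda>v::real^'a. ip \<pi> (vec_nth v) (opm M (vec_nth v)))"
      unfolding ip_def opm_def by (intro continuous_intros)
    have c2: "continuous_on (sphere 0 1) (\<lambda>v::real^'a. ip \<pi> (vec_nth v) (vec_nth v))"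
      unfolding ip_def by (intro continuous_intros)
    show ?thesis unfolding q_def
        using den by (intro continuous_on_divide c1 c2) blast
  qed
  obtain v1 :: "real^'a" where "norm v1 = 1" using vector_choose_size[of 1] by auto
  then have ne: "sphere (0::real^'a) 1 \<noteq> {}" by auto
  obtain v0 where v0: "v0 \<in> sphere 0 1" and mn: "\<And>v. v \<in> sphere 0 1 \<Longrightarrow> q v0 \<le> q v"
    using continuous_attains_inf[OF compact_sphere ne cont] by blast
  define \<mu> where "\<mu> = q v0"
  define u0 where "u0 = vec_nth v0"
  have R: "\<mu> * ip \<pi> z z \<le> ip \<pi> z (opm M z)" for z
  proof (cases "vec_lambda z = (0::real^'a)")
    case True
    then have "z = (\<lambda>_. 0)" by (auto simp: vec_eq_iff fun_eq_iff)
    then show ?thesis by (simp add: ip_def)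
  next
    case False
    define w :: "real^'a" where "w = vec_lambda z"
    define s where "s = norm w"
    have s: "s > 0" using False unfolding s_def w_def by simp
    define v where "v = (1 / s) *\<^sub>R w"
    have vs: "v \<in> sphere 0 1" unfolding v_def s_def using s s_def by simp
    have vn: "vec_nth v = (\<lambda>x. (1/s) * z x)" unfolding v_def w_def by (simp add: fun_eq_iff)
    have "q v = ip \<pi> z (opm M z) / ip \<pi> z z"
      unfolding q_def vn opm_scale ip_scale_left ip_scale_right using s by simp
    moreover obtain x where "z x \<noteq> 0" using False by (auto simp: vec_eq_iff)
    then have "ip \<pi> z z > 0" by (rule ip_self_pos[OF pos])
    ultimately show ?thesis using mn[OF vs] unfolding \<mu>_def by (simp add: pos_le_divide_eq)
  qed
  have "v0 \<noteq> 0" using v0 by auto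
  then obtain x0 where "v0 $ x0 \<noteq> 0" by (auto simp: vec_eq_iff)
  then have u0pos: "ip \<pi> u0 u0 > 0" unfolding u0_def by (rule ip_self_pos[OF pos])
  have R0: "ip \<pi> u0 (opm M u0) = \<mu> * ip \<pi> u0 u0"
    using u0pos unfolding \<mu>_def q_def u0_def by simp
  define W where "W = (\<lambda>x. opm M u0 x - \<mu> * u0 x)"
  have bW: "ip \<pi> y W = 0" for y
  proof -
    define Ry where "Ry = ip \<pi> y (opm M y) - \<mu> * ip \<pi> y y"
    have Ry: "Ry \<ge> 0" using R[of y] unfolding Ry_def by simp
    have "0 \<le> 2 * t * ip \<pi> y W + t^2 * Ry" for t
    proof -
      have sa: "ip \<pi> u0 (opm M y) = ip \<pi> y (opm M u0)"
        using selfadj[OF sy, of u0 y] ip_sym by metis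
      have "ip \<pi> (\<lambda>x. u0 x + t * y x) (opm M (\<lambda>x. u0 x + t * y x)) - \<mu> * ip \<pi> (\<lambda>x. u0 x + t * y x) (\<lambda>x. u0 x + t * y x)
          = (ip \<pi> u0 (opm M u0) - \<mu> * ip \<pi> u0 u0) + 2 * t * ip \<pi> y W + t^2 * Ry"
        unfolding W_def Ry_def opm_add opm_scale ip_add_left ip_add_right ip_scale_left ip_scale_right ip_diff_right sa
        using ip_sym[of \<pi> u0 y] by (simp add: algebra_simps power2_eq_square)
      then show ?thesis using R[of "\<lambda>x. u0 x + t * y x"] R0 by simp
    qed
    then show ?thesis using quad[OF Ry] by blast
  qed
  have W0: "W x = 0" for x using ip_self_zero[OF pos bW[of W]] .
  have eig: "is_eigenvalue M (complex_of_real \<mu>)"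
    unfolding is_eigenvalue_def
  proof (intro exI conjI)
    show "(\<chi> x. complex_of_real (u0 x)) \<noteq> 0"
      using \<open>v0 $ x0 \<noteq> 0\<close> unfolding u0_def by (auto simp: vec_eq_iff)
    show "cmat M *v (\<chi> x. complex_of_real (u0 x)) = complex_of_real \<mu> *s (\<chi> x. complex_of_real (u0 x))"
    proof (subst vec_eq_iff, intro allI)
      fix x
      have "opm M u0 x = \<mu> * u0 x" using W0[of x] unfolding W_def by simp
      then show "(cmat M *v (\<chi> x. complex_of_real (u0 x))) $ x = (complex_of_real \<mu> *s (\<chi> x. complex_of_real (u0 x))) $ x"
        unfolding cmat_def matrix_vector_mult_def opm_def by (simp flip: of_real_mult of_real_sum)
    qed
  qed
  then have "\<mu> \<ge> 0" using ev unfolding eigenvalues_nonneg_def by auto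
  then show ?thesis using R[of w] ip_self_nonneg[OF pos, of w] by (meson mult_nonneg_nonneg order_trans)
qed

lemma comb_entry: "(\<Sum>k<l. a k *\<^sub>R (M k :: real^'n^'n)) $ x $ y = (\<Sum>k<l. a k * M k $ x $ y)"
  by simp

lemma comb_tm:
  assumes "\<And>k. k < l \<Longrightarrow> transition_matrix (M k)" "\<And>k. k < l \<Longrightarrow> a k > 0" "(\<Sum>k<l. a k) = 1"
  shows "transition_matrix (\<Sum>k<l. a k *\<^sub>R (M k :: real^'n^'n))"
  unfolding transition_matrix_def comb_entry
proof (intro conjI allI)
  fix x y
  show "0 \<le> (\<Sum>k<l. a k * M k $ x $ y)"
    using assms(1,2) unfolding transition_matrix_def by (intro sum_nonneg) (simp add: less_imp_le)
next
  fix x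
  have "(\<Sum>y\<in>UNIV. \<Sum>k<l. a k * M k $ x $ y) = (\<Sum>k<l. a k * (\<Sum>y\<in>UNIV. M k $ x $ y))"
    by (simp add: sum.swap[of _ UNIV] sum_distrib_left)
  also have "\<dots> = (\<Sum>k<l. a k)"
    using assms(1) unfolding transition_matrix_def by simp
  finally show "(\<Sum>y\<in>UNIV. \<Sum>k<l. a k * M k $ x $ y) = 1" using assms(3) by simp
qed

lemma comb_symm:
  assumes "\<And>k. k < l \<Longrightarrow> symm \<pi> (M k)"
  shows "symm \<pi> (\<Sum>k<l. a k *\<^sub>R (M k :: real^'n^'n))"
  unfolding symm_def comb_entry
proof (intro allI)
  fix x y
  have "\<pi> $ x * (\<Sum>k<l. a k * M k $ x $ y) = (\<Sum>k<l. a k * (\<pi> $ x * M k $ x $ y))"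
    by (simp add: sum_distrib_left mult_ac)
  also have "\<dots> = (\<Sum>k<l. a k * (\<pi> $ y * M k $ y $ x))"
    using assms unfolding symm_def by simp
  also have "\<dots> = \<pi> $ y * (\<Sum>k<l. a k * M k $ y $ x)"
    by (simp add: sum_distrib_left mult_ac)
  finally show "\<pi> $ x * (\<Sum>k<l. a k * M k $ x $ y) = \<pi> $ y * (\<Sum>k<l. a k * M k $ y $ x)" .
qed

lemma ip_opm_comb:
  "ip \<pi> w (opm (\<Sum>k<l. a k *\<^sub>R (M k :: real^'n^'n)) w) = (\<Sum>k<l. a k * ip \<pi> w (opm (M k) w))"
  unfolding ip_def opm_def comb_entry
  by (simp add: sum_distrib_left sum_distrib_right sum.swap[of _ "{..<l}"] mult_ac)

lemma ip_opm_minus: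
  "ip \<pi> w (opm (A - B) w) = ip \<pi> w (opm A w) - ip \<pi> w (opm B w)"
  unfolding ip_def opm_def by (simp add: algebra_simps sum_subtractf)

lemma symm_rev: "symm \<pi> P = reversible \<pi> P"
  unfolding symm_def reversible_def by simp

lemma symm_minus: "symm \<pi> A \<Longrightarrow> symm \<pi> B \<Longrightarrow> symm \<pi> (A - B)"
  unfolding symm_def by (simp add: algebra_simps)

lemma compare:
  assumes pd: "prob_dist \<pi>"
    and sy: "symm \<pi> P" "transition_matrix P" "irreducible_chain P"
    and sy': "symm \<pi> P'" "transition_matrix P'" "irreducible_chain P'"
    and dom: "\<And>w. ip \<pi> w (opm P' w) \<le> ip \<pi> w (opm P w)"
  shows "asym_var \<pi> f P' \<le> asym_var \<pi> f P"
proof -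
  have pos: "\<forall>x. \<pi> $ x > 0" using pd unfolding prob_dist_def by simp
  define \<mu> where "\<mu> = ip \<pi> (\<lambda>_. 1) f"
  define h where "h = (\<lambda>x. f x - \<mu>)"
  have one: "ip \<pi> (\<lambda>_. 1) (\<lambda>_. c) = c" for c
    using pd unfolding prob_dist_def ip_def by (simp add: sum_distrib_right[symmetric])
  have h0: "ip \<pi> (\<lambda>_. 1) h = 0" unfolding h_def ip_diff_right one \<mu>_def by simp
  obtain g where g: "\<And>x. h x = g x - opm P g x" using poisson[OF pd sy h0] by blast
  obtain g' where g': "\<And>x. h x = g' x - opm P' g' x" using poisson[OF pd sy' h0] by blast
  have Qg: "opm P g = (\<lambda>x. g x - h x)" using g by (auto simp: fun_eq_iff)
  have Qg': "opm P' g' = (\<lambda>x. g' x - h x)" using g' by (auto simp: fun_eq_iff)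
  have fg: "f x = \<mu> + g x - opm P g x" for x using g[of x] unfolding h_def by simp
  have fg': "f x = \<mu> + g' x - opm P' g' x" for x using g'[of x] unfolding h_def by simp
  have AV: "asym_var \<pi> f P = 2 * ip \<pi> g h - ip \<pi> h h"
  proof -
    have "ip \<pi> g ((opm P ^^ 2) g) = ip \<pi> (opm P g) (opm P g)"
      using selfadj[OF sy(1), of g "opm P g"] by (simp add: numeral_2_eq_2)
    then show ?thesis unfolding asym_var_formula[OF pd sy(1,2) \<mu>_def fg] Qg
      by (simp add: ip_diff_left ip_diff_right ip_sym[of \<pi> h g])
  qed
  have AV': "asym_var \<pi> f P' = 2 * ip \<pi> g' h - ip \<pi> h h"
  proof -
    have "ip \<pi> g' ((opm P' ^^ 2) g') = ip \<pi> (opm P' g') (opm P' g')"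
      using selfadj[OF sy'(1), of g' "opm P' g'"] by (simp add: numeral_2_eq_2)
    then show ?thesis unfolding asym_var_formula[OF pd sy'(1,2) \<mu>_def fg'] Qg'
      by (simp add: ip_diff_left ip_diff_right ip_sym[of \<pi> h g'])
  qed
  define d where "d = (\<lambda>x. g' x - g x)"
  have F1: "ip \<pi> d (opm P d) \<le> ip \<pi> d d" by (rule psd_trans[OF sy(1,2) pos])
  have c: "ip \<pi> g (opm P g') = ip \<pi> g g' - ip \<pi> g' h"
    using selfadj[OF sy(1), of g g'] unfolding Qg by (simp add: ip_diff_left ip_sym[of \<pi> h g'])
  have e1: "ip \<pi> d d = ip \<pi> g' g' - 2 * ip \<pi> g g' + ip \<pi> g g"
    unfolding d_def by (simp add: ip_diff_left ip_diff_right ip_sym[of \<pi> g' g])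
  have e2: "ip \<pi> d (opm P d) = ip \<pi> g' (opm P g') - (ip \<pi> g' g - ip \<pi> g' h) - ip \<pi> g (opm P g') + (ip \<pi> g g - ip \<pi> g h)"
    unfolding d_def opm_diff by (simp add: ip_diff_left ip_diff_right Qg)
  have F2: "ip \<pi> g' (opm P' g') \<le> ip \<pi> g' (opm P g')" by (rule dom)
  have e3: "ip \<pi> g' (opm P' g') = ip \<pi> g' g' - ip \<pi> g' h" unfolding Qg' by (simp add: ip_diff_right)
  have "ip \<pi> g' h \<le> ip \<pi> g h"
    using F1 F2 c e1 e2 e3 ip_sym[of \<pi> g' g] ip_sym[of \<pi> h g] ip_sym[of \<pi> h g'] by linarith
  then show ?thesis unfolding AV AV' by simp
qed

theorem theorem5:
  fixes \<pi> :: "real^'n"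
    and Ps Ps' :: "nat \<Rightarrow> real^'n^'n"
    and a :: "nat \<Rightarrow> real"
    and l :: nat
  assumes "prob_dist \<pi>"
    and "\<And>k. k < l \<Longrightarrow> transition_matrix (Ps k) \<and> reversible \<pi> (Ps k)"
    and "\<And>k. k < l \<Longrightarrow> transition_matrix (Ps' k) \<and> reversible \<pi> (Ps' k)"
    and "\<And>k. k < l \<Longrightarrow> a k > 0"
    and "(\<Sum>k<l. a k) = 1"
    and "irreducible_chain (\<Sum>k<l. a k *\<^sub>R Ps k)"
    and "irreducible_chain (\<Sum>k<l. a k *\<^sub>R Ps' k)"
    and "\<And>k. k < l \<Longrightarrow> eigenvalues_nonneg (Ps k - Ps' k)"
  shows "efficiency_dominates \<pi> (\<Sum>k<l. a k *\<^sub>R Ps' k) (\<Sum>k<l. a k *\<^sub>R Ps k)"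
proof -
  have pos: "\<forall>x. \<pi> $ x > 0" using assms(1) unfolding prob_dist_def by simp
  have s1: "symm \<pi> (Ps k)" if "k < l" for k using assms(2)[OF that] symm_rev by blast
  have s2: "symm \<pi> (Ps' k)" if "k < l" for k using assms(3)[OF that] symm_rev by blast
  have dom: "ip \<pi> w (opm (\<Sum>k<l. a k *\<^sub>R Ps' k) w) \<le> ip \<pi> w (opm (\<Sum>k<l. a k *\<^sub>R Ps k) w)" for w
  proof -
    have "(\<Sum>k<l. a k * ip \<pi> w (opm (Ps' k) w)) \<le> (\<Sum>k<l. a k * ip \<pi> w (opm (Ps k) w))"
    proof (rule sum_mono)
      fix k assume "k \<in> {..<l}"
      then have k: "k < l" by simp
      have "0 \<le> ip \<pi> w (opm (Ps k - Ps' k) w)"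
        by (rule eigen_psd[OF pos symm_minus[OF s1[OF k] s2[OF k]] assms(8)[OF k]])
      then have "ip \<pi> w (opm (Ps' k) w) \<le> ip \<pi> w (opm (Ps k) w)" unfolding ip_opm_minus by simp
      then show "a k * ip \<pi> w (opm (Ps' k) w) \<le> a k * ip \<pi> w (opm (Ps k) w)"
        using assms(4)[OF k] by (simp add: mult_left_mono)
    qed
    then show ?thesis unfolding ip_opm_comb .
  qed
  show ?thesis unfolding efficiency_dominates_def
  proof
    fix f
    show "asym_var \<pi> f (\<Sum>k<l. a k *\<^sub>R Ps' k) \<le> asym_var \<pi> f (\<Sum>k<l. a k *\<^sub>R Ps k)"
    proof (rule compare[OF assms(1) _ _ assms(6) _ _ assms(7) dom])
      show "symm \<pi> (\<Sum>k<l. a k *\<^sub>R Ps k)" by (rule comb_symm) (rule s1)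
      show "symm \<pi> (\<Sum>k<l. a k *\<^sub>R Ps' k)" by (rule comb_symm) (rule s2)
      show "transition_matrix (\<Sum>k<l. a k *\<^sub>R Ps k)" using assms(2,4,5) by (intro comb_tm) auto
      show "transition_matrix (\<Sum>k<l. a k *\<^sub>R Ps' k)" using assms(3,4,5) by (intro comb_tm) auto
    qed
  qed
qed

end
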